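(* For $n\ge2$ and all $P,Q\in\Gamma_n$, $D_{\Psi I}(P\|Q)\le \frac{10}9 D_{\Psi h}(P\|Q)$.
   Context: $\Gamma_n=\{P=(p_1,\dots,p_n): p_i>0,\ \sum p_i=1\}$. $h(P\|Q)=\frac12\sum_{i=1}^n(\sqrt{p_i}-\sqrt{q_i})^2$; $\Psi(P\|Q)=\sum_{i=1}^n\frac{(p_i-q_i)^2(p_i+q_i)}{p_iq_i}$; $I(P\|Q)=\frac12\Big[\sum_{i=1}^n p_i\ln\frac{2p_i}{p_i+q_i}+\sum_{i=1}^n q_i\ln\frac{2q_i}{p_i+q_i}\Big]$. $D_{\Psi I}=\frac1{16}\Psi-I$, $D_{\Psi h}=\frac1{16}\Psi-h$. *)

theory Defs
  imports Complex_Main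
begin

definition Gamma :: "nat \<Rightarrow> (nat \<Rightarrow> real) set" where
  "Gamma n = {p. (\<forall>i<n. p i > 0) \<and> (\<Sum>i<n. p i) = 1}"

definition hell :: "nat \<Rightarrow> (nat \<Rightarrow> real) \<Rightarrow> (nat \<Rightarrow> real) \<Rightarrow> real" where
  "hell n p q = (1/2) * (\<Sum>i<n. (sqrt (p i) - sqrt (q i))^2)"

definition Psi :: "nat \<Rightarrow> (nat \<Rightarrow> real) \<Rightarrow> (nat \<Rightarrow> real) \<Rightarrow> real" where
  "Psi n p q = (\<Sum>i<n. (p i - q i)^2 * (p i + q i) / (p i * q i))"

definition JSI :: "nat \<Rightarrow> (nat \<Rightarrow> real) \<Rightarrow> (nat \<Rightarrow> real) \<Rightarrow> real" where
  "JSI n p q = (1/2) * ((\<Sum>i<n. p i * ln (2 * p i / (p i + q i)))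
                       + (\<Sum>i<n. q i * ln (2 * q i / (p i + q i))))"

definition D_PsiI :: "nat \<Rightarrow> (nat \<Rightarrow> real) \<Rightarrow> (nat \<Rightarrow> real) \<Rightarrow> real" where
  "D_PsiI n p q = Psi n p q / 16 - JSI n p q"

definition D_Psih :: "nat \<Rightarrow> (nat \<Rightarrow> real) \<Rightarrow> (nat \<Rightarrow> real) \<Rightarrow> real" where
  "D_Psih n p q = Psi n p q / 16 - hell n p q"

end

theory Submission
  imports Defs
begin

definition HH :: "real \<Rightarrow> real" where
 "HH t = (2*t^2 - 1 - 1/t^4)/16 - 5 + 5/t + (9/2)*(ln 2 + 2*ln t - ln (t^2+1))"
definition GG :: "real \<Rightarrow> real" where
 "GG t = (t^2-1)^2*(t^2+1)/(16*t^2) - 5*(t-1)^2 + (9/2)*(t^2*(ln 2 + 2*ln t - ln (t^2+1)) + ln 2 - ln (t^2+1))"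

lemma poly_nonneg:
  fixes t :: real assumes "t > 0"
  shows "0 \<le> (t^6+1)*(t^2+1) - 20*t^3*(t^2+1) + 36*t^4"
proof -
  have e: "((t^6+1)*(t^2+1) - 20*t^3*(t^2+1) + 36*t^4) = (t-1)^4*((t^2+1)^2+4*t*(t^2+1)+9*t^2)"
    by algebra
  have "0 \<le> (t-1)^4*((t^2+1)^2+4*t*(t^2+1)+9*t^2)" using assms by (intro mult_nonneg_nonneg) auto
  then show ?thesis by (simp only: e)
qed

lemma HH_deriv:
  fixes t :: real assumes "t > 0"
  shows "(HH has_real_derivative ((t^6+1)*(t^2+1) - 20*t^3*(t^2+1) + 36*t^4)/(4*t^5*(t^2+1))) (at t)"
proof -
 have p: "t^2+1 > 0" "t \<noteq> 0" using assms by (auto intro: add_pos_nonneg)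
 obtain s where s: "t^2+1 = s" "s > 0" "s \<noteq> 0" using p by auto
 show ?thesis
 unfolding HH_def[abs_def]
 apply (rule derivative_eq_intros refl | (use assms p in simp; fail))+
 apply (simp only: s)
 using s p apply (simp add: field_simps)
 apply (simp only: s(1)[symmetric])
 apply (simp add: algebra_simps power2_eq_square power_numeral_reduce)
 done
qed

lemma HH_deriv_nonneg:
  fixes t :: real assumes "t > 0"
  shows "\<exists>y. (HH has_real_derivative y) (at t) \<and> y \<ge> 0"
proof (intro exI conjI)
  show "(HH has_real_derivative ((t^6+1)*(t^2+1) - 20*t^3*(t^2+1) + 36*t^4)/(4*t^5*(t^2+1))) (at t)"
    by (rule HH_deriv[OF assms])
  have "0 < 4*t^5*(t^2+1)" using assms by (intro mult_pos_pos) (auto intro: add_pos_nonneg)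
  then show "0 \<le> ((t^6+1)*(t^2+1) - 20*t^3*(t^2+1) + 36*t^4)/(4*t^5*(t^2+1))"
    using poly_nonneg[OF assms] by simp
qed

lemma HH1: "HH 1 = 0" by (simp add: HH_def)
lemma GG1: "GG 1 = 0" by (simp add: GG_def)

lemma HH_le: fixes t :: real assumes "0 < t" "t \<le> 1" shows "HH t \<le> 0"
proof -
  have "HH t \<le> HH 1"
    by (rule DERIV_nonneg_imp_nondecreasing[OF assms(2)]) (use assms HH_deriv_nonneg in auto)
  then show ?thesis by (simp add: HH1)
qed

lemma HH_ge: fixes t :: real assumes "1 \<le> t" shows "HH t \<ge> 0"
proof -
  have "HH 1 \<le> HH t"
    by (rule DERIV_nonneg_imp_nondecreasing[OF assms]) (use assms HH_deriv_nonneg in auto)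
  then show ?thesis by (simp add: HH1)
qed

lemma GG_deriv:
  fixes t :: real assumes "t > 0"
  shows "(GG has_real_derivative (2*t*HH t)) (at t)"
proof -
 have p: "t^2+1 > 0" "t \<noteq> 0" using assms by (auto intro: add_pos_nonneg)
 obtain s where s: "t^2+1 = s" "s > 0" "s \<noteq> 0" using p by auto
 show ?thesis
 unfolding GG_def[abs_def] HH_def
 apply (rule derivative_eq_intros refl | (use assms p in simp; fail))+
 apply (simp only: s)
 using s p apply (simp add: field_simps)
 apply (simp only: s(1)[symmetric])
 apply (simp add: algebra_simps power2_eq_square power_numeral_reduce)
 done
qed

lemma GG_nonneg: fixes t :: real assumes "0 < t" shows "GG t \<ge> 0"
proof (cases "t \<le> 1")
  case True
  have "GG 1 \<le> GG t"
  proof (rule deriv_nonpos_imp_antimono[of t 1 GG "\<lambda>x. 2*x*HH x", OF _ _ True])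
    fix x assume "x \<in> {t..1}"
    then have x: "0 < x" "x \<le> 1" using assms by auto
    show "(GG has_real_derivative 2*x*HH x) (at x)" using GG_deriv x by auto
    show "2*x*HH x \<le> 0" using HH_le[OF x] x by (simp add: mult_nonneg_nonpos)
  qed
  then show ?thesis by (simp add: GG1)
next
  case False
  have "GG 1 \<le> GG t"
  proof (rule DERIV_nonneg_imp_nondecreasing[of 1 t GG])
    show "1 \<le> t" using False by simp
    fix x assume "1 \<le> x" "x \<le> t"
    then show "\<exists>y. (GG has_real_derivative y) (at x) \<and> 0 \<le> y"
      using GG_deriv HH_ge by (intro exI[of _ "2*x*HH x"]) auto
  qed
  then show ?thesis by (simp add: GG1)
qed

lemma key_ab:
  fixes a b :: real assumes a: "a > 0" and b: "b > 0"
  shows "0 \<le> (a^2-b^2)^2*(a^2+b^2)/(a^2*b^2)/16 - 5*(a-b)^2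
          + (9/2)*(a^2*ln(2*a^2/(a^2+b^2))) + (9/2)*(b^2*ln(2*b^2/(a^2+b^2)))"
proof -
  have s: "a^2+b^2 > 0" using a b by (auto intro: add_pos_pos)
  have l1: "ln(2*a^2/(a^2+b^2)) = ln 2 + 2*ln a - ln(a^2+b^2)"
    using a s by (simp add: ln_div ln_mult ln_realpow)
  have l2: "ln(2*b^2/(a^2+b^2)) = ln 2 + 2*ln b - ln(a^2+b^2)"
    using b s by (simp add: ln_div ln_mult ln_realpow)
  have l3: "ln (a/b) = ln a - ln b" using a b by (simp add: ln_div)
  have e4: "(a/b)^2+1 = (a^2+b^2)/b^2" using b by (simp add: field_simps)
  have l4: "ln ((a/b)^2+1) = ln(a^2+b^2) - 2*ln b"
    unfolding e4 using b s by (simp add: ln_div ln_realpow)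
  have g: "0 \<le> GG (a/b)" using GG_nonneg a b by simp
  have "b^2 * GG (a/b) = (a^2-b^2)^2*(a^2+b^2)/(a^2*b^2)/16 - 5*(a-b)^2
          + (9/2)*(a^2*ln(2*a^2/(a^2+b^2))) + (9/2)*(b^2*ln(2*b^2/(a^2+b^2)))"
    unfolding GG_def l1 l2 l3 l4 using a b
    by (simp add: field_simps)
  moreover have "0 \<le> b^2 * GG (a/b)" using g by simp
  ultimately show ?thesis by simp
qed

lemma key_pq:
  fixes p q :: real assumes p: "p > 0" and q: "q > 0"
  shows "0 \<le> (p-q)^2*(p+q)/(p*q)/16 - 5*(sqrt p - sqrt q)^2
          + (9/2)*(p*ln(2*p/(p+q))) + (9/2)*(q*ln(2*q/(p+q)))"
  using key_ab[of "sqrt p" "sqrt q"] p q by simp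

theorem proposition5p11:
  fixes n :: nat and P Q :: "nat \<Rightarrow> real"
  assumes "n \<ge> 2" and "P \<in> Gamma n" and "Q \<in> Gamma n"
  shows "D_PsiI n P Q \<le> (10/9) * D_Psih n P Q"
proof -
  have pos: "\<And>i. i < n \<Longrightarrow> P i > 0 \<and> Q i > 0" using assms(2,3) by (auto simp: Gamma_def)
  have "0 \<le> (\<Sum>i<n. (P i-Q i)^2*(P i+Q i)/(P i*Q i)/16 - 5*(sqrt (P i) - sqrt (Q i))^2
          + (9/2)*(P i*ln(2*P i/(P i+Q i))) + (9/2)*(Q i*ln(2*Q i/(P i+Q i))))"
    using pos key_pq by (intro sum_nonneg) auto
  also have "\<dots> = Psi n P Q/16 - 10*hell n P Q + 9*JSI n P Q"
    unfolding Psi_def hell_def JSI_def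
    by (simp add: sum.distrib sum_subtractf sum_divide_distrib sum_distrib_left algebra_simps)
  finally show ?thesis unfolding D_PsiI_def D_Psih_def by simp
qed

end
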